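(* Every real binary quartic form $p\in F_{2,4}$ has a unique signature, i.e. $\mathcal B(p)$ has exactly one minimal element with respect to $\preceq$.
   Context: $F_{2,4}$ is the space of real binary forms of degree $4$ in $x,y$. A representation of $p\in F_{2,4}$ is an expression $p=\sum_{j=1}^r\lambda_j(\alpha_jx+\beta_jy)^{4}$ with $r\ge0$ (empty sum $=0$), $\alpha_j,\beta_j\in\mathbb R$, $0\ne\lambda_j\in\mathbb R$; it is honest if the linear forms $\alpha_jx+\beta_jy$ are pairwise non-proportional. Its badge is $(a,b)$ where $a=\#\{j:\lambda_j>0\}$, $b=\#\{j:\lambda_j<0\}$. $\mathcal B(p)$ is the set of badges of honest representations of $p$. Badges are ordered by $(a,b)\preceq(c,d)$ iff $a\le c$ and $b\le d$; a signature of $p$ is a minimal element of $\mathcal B(p)$. *)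

theory Defs
  imports Complex_Main
begin

definition binary_quartic :: "(real \<Rightarrow> real \<Rightarrow> real) \<Rightarrow> bool" where
  "binary_quartic p \<longleftrightarrow>
     (\<exists>c :: nat \<Rightarrow> real. \<forall>x y. p x y = (\<Sum>i\<le>4. c i * x ^ i * y ^ (4 - i)))"

definition is_representation :: "(real \<Rightarrow> real \<Rightarrow> real) \<Rightarrow> (real \<times> real \<times> real) list \<Rightarrow> bool" where
  "is_representation p rs \<longleftrightarrow>
     (\<forall>t\<in>set rs. fst t \<noteq> 0) \<and>
     (\<forall>x y. p x y = (\<Sum>(l, a, b)\<leftarrow>rs. l * (a * x + b * y) ^ 4))"

text \<open>Two linear forms a x + b y and a' x + b' y are proportional iff a b' - a' b = 0.\<close>
definition proportional :: "real \<times> real \<Rightarrow> real \<times> real \<Rightarrow> bool" where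
  "proportional u v \<longleftrightarrow> fst u * snd v - fst v * snd u = 0"

definition honest :: "(real \<times> real \<times> real) list \<Rightarrow> bool" where
  "honest rs \<longleftrightarrow>
     (\<forall>i<length rs. \<forall>j<length rs. i \<noteq> j \<longrightarrow> \<not> proportional (snd (rs ! i)) (snd (rs ! j)))"

definition badge :: "(real \<times> real \<times> real) list \<Rightarrow> nat \<times> nat" where
  "badge rs = (length (filter (\<lambda>t. fst t > 0) rs), length (filter (\<lambda>t. fst t < 0) rs))"

definition badges :: "(real \<Rightarrow> real \<Rightarrow> real) \<Rightarrow> (nat \<times> nat) set" where
  "badges p = {badge rs | rs. is_representation p rs \<and> honest rs}"

definition badge_le :: "nat \<times> nat \<Rightarrow> nat \<times> nat \<Rightarrow> bool" where
  "badge_le u v \<longleftrightarrow> fst u \<le> fst v \<and> snd u \<le> snd v"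

definition is_signature :: "(real \<Rightarrow> real \<Rightarrow> real) \<Rightarrow> nat \<times> nat \<Rightarrow> bool" where
  "is_signature p s \<longleftrightarrow> s \<in> badges p \<and> (\<forall>t\<in>badges p. badge_le t s \<longrightarrow> t = s)"

end

theory Submission
  imports Defs "HOL-Computational_Algebra.Polynomial"
begin


definition homog :: "nat \<Rightarrow> real poly \<Rightarrow> real \<Rightarrow> real \<Rightarrow> real" where
  "homog n P a b = (\<Sum>i\<le>n. coeff P i * a ^ i * b ^ (n - i))"

lemma homog_eq:
  assumes "b \<noteq> 0" "degree P \<le> n"
  shows "homog n P a b = b ^ n * poly P (a / b)"
proof -
  have "poly P (a/b) = (\<Sum>i\<le>n. coeff P i * (a/b) ^ i)"
    using assms(2) by (simp add: poly_altdef, intro sum.mono_neutral_left) (auto simp: coeff_eq_0)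
  hence "b ^ n * poly P (a / b) = (\<Sum>i\<le>n. coeff P i * ((a/b) ^ i * b ^ n))"
    by (simp add: sum_distrib_left mult_ac)
  also have "\<dots> = (\<Sum>i\<le>n. coeff P i * a ^ i * b ^ (n - i))"
  proof (intro sum.cong refl)
    fix i assume "i \<in> {..n}"
    hence "b ^ n = b ^ i * b ^ (n - i)" by (simp add: power_add[symmetric])
    thus "coeff P i * ((a/b) ^ i * b ^ n) = coeff P i * a ^ i * b ^ (n - i)"
      using assms(1) by (simp add: power_divide field_simps)
  qed
  finally show ?thesis by (simp add: homog_def)
qed

lemma homog_zero: "homog n P a 0 = coeff P n * a ^ n"
proof -
  have "homog n P a 0 = (\<Sum>i\<le>n. if i = n then coeff P n * a ^ n else 0)"
    unfolding homog_def by (intro sum.cong refl) auto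
  thus ?thesis by simp
qed

lemma coeff_mult_top:
  assumes "degree P \<le> n" "degree Q \<le> m"
  shows "coeff (P * Q) (n + m) = coeff P n * coeff Q m"
proof (cases "degree P = n \<and> degree Q = m")
  case True thus ?thesis using coeff_mult_degree_sum[of P Q] by simp
next
  case False
  hence "coeff P n * coeff Q m = 0" using assms by (auto simp: coeff_eq_0)
  moreover have "degree (P * Q) < n + m \<or> P * Q = 0"
    using False assms degree_mult_le[of P Q] by (cases "P = 0 \<or> Q = 0") (auto simp: degree_mult_eq)
  ultimately show ?thesis by (auto simp: coeff_eq_0)
qed

lemma homog_mult:
  assumes "degree P \<le> n" "degree Q \<le> m"
  shows "homog (n + m) (P * Q) a b = homog n P a b * homog m Q a b"
proof (cases "b = 0")
  case True thus ?thesis using coeff_mult_top[OF assms] by (simp add: homog_zero power_add)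
next
  case False
  have "degree (P * Q) \<le> n + m" using degree_mult_le[of P Q] assms by linarith
  thus ?thesis using False assms by (simp add: homog_eq power_add poly_mult)
qed

lemma homog_add: "homog n (P + Q) a b = homog n P a b + homog n Q a b"
  by (simp add: homog_def sum.distrib algebra_simps)

lemma homog_smult: "homog n (smult c P) a b = c * homog n P a b"
  by (simp add: homog_def sum_distrib_left algebra_simps)

lemma homog_1: "homog 1 P a b = coeff P 0 * b + coeff P 1 * a"
  by (simp add: homog_def)

lemma homog_Suc0: "homog (Suc 0) P a b = coeff P 0 * b + coeff P 1 * a"
  by (simp add: homog_def)

lemma homog_0: "homog 0 P a b = coeff P 0"
  by (simp add: homog_def)

definition hform :: "nat \<Rightarrow> (real \<Rightarrow> real \<Rightarrow> real) \<Rightarrow> bool" where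
  "hform n f \<longleftrightarrow> (\<exists>P. degree P \<le> n \<and> (\<forall>a b. f a b = homog n P a b))"

lemma hform_add: "hform n f \<Longrightarrow> hform n g \<Longrightarrow> hform n (\<lambda>a b. f a b + g a b)"
  unfolding hform_def
  by (metis (no_types, lifting) degree_add_le homog_add)

lemma hform_smult: "hform n f \<Longrightarrow> hform n (\<lambda>a b. c * f a b)"
  unfolding hform_def
  by (metis (no_types, lifting) degree_smult_le dual_order.trans homog_smult)

lemma hform_diff: "hform n f \<Longrightarrow> hform n g \<Longrightarrow> hform n (\<lambda>a b. f a b - g a b)"
  using hform_add[of n f "\<lambda>a b. (-1) * g a b"] hform_smult[of n g "-1"] by simp

lemma hform_mult: "hform n f \<Longrightarrow> hform m g \<Longrightarrow> hform (n + m) (\<lambda>a b. f a b * g a b)"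
  unfolding hform_def
proof (elim exE conjE)
  fix P Q assume "degree P \<le> n" "\<forall>a b. f a b = homog n P a b" "degree Q \<le> m" "\<forall>a b. g a b = homog m Q a b"
  thus "\<exists>R. degree R \<le> n + m \<and> (\<forall>a b. f a b * g a b = homog (n + m) R a b)"
    by (intro exI[of _ "P * Q"]) (auto intro: order.trans[OF degree_mult_le] simp: homog_mult)
qed

lemma hform_lin: "hform 1 (\<lambda>a b. r * a + s * b)"
  unfolding hform_def
  by (intro exI[of _ "[:s, r:]"]) (auto simp: homog_Suc0 algebra_simps)

lemma hform1_E:
  assumes "hform 1 f" shows "\<exists>r s. \<forall>a b. f a b = r * a + s * b"
proof -
  obtain P where "\<forall>a b. f a b = homog 1 P a b" using assms unfolding hform_def by blast
  hence "\<forall>a b. f a b = coeff P 1 * a + coeff P 0 * b" by (simp add: homog_Suc0 algebra_simps)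
  thus ?thesis by blast
qed

lemma hform0_E: "hform 0 f \<Longrightarrow> \<exists>c. \<forall>a b. f a b = c"
  unfolding hform_def by (auto simp: homog_0)

lemma hform_div:
  assumes "hform (Suc n) f" "f t1 t2 = 0" "(t1, t2) \<noteq> (0, 0)"
  shows "\<exists>g. hform n g \<and> (\<forall>a b. f a b = (t2 * a - t1 * b) * g a b)"
proof -
  obtain P where P: "degree P \<le> Suc n" "\<And>a b. f a b = homog (Suc n) P a b"
    using assms(1) unfolding hform_def by blast
  show ?thesis
  proof (cases "t2 = 0")
    case True
    hence "t1 \<noteq> 0" using assms(3) by auto
    from assms(2) have "coeff P (Suc n) * t1 ^ Suc n = 0" using True by (simp add: P homog_zero)
    hence "coeff P (Suc n) = 0" using \<open>t1 \<noteq> 0\<close> by simp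
    have dP: "degree P \<le> n"
    proof (rule ccontr)
      assume "\<not> degree P \<le> n"
      hence "degree P = Suc n" using P(1) by simp
      hence "P = 0" using \<open>coeff P (Suc n) = 0\<close> leading_coeff_0_iff by metis
      thus False using \<open>degree P = Suc n\<close> by simp
    qed
    have "\<And>a b. homog (1 + n) ([:1:] * P) a b = homog 1 [:1:] a b * homog n P a b"
      by (rule homog_mult) (use dP in auto)
    hence e: "\<And>a b. f a b = b * homog n P a b" by (simp add: P homog_1 homog_Suc0)
    have "hform n (homog n P)" using dP unfolding hform_def by blast
    from hform_smult[OF this, of "-1/t1"] show ?thesis
      by (intro exI[of _ "\<lambda>a b. (-1/t1) * homog n P a b"] conjI)
         (use \<open>t1 \<noteq> 0\<close> True in \<open>auto simp: e\<close>)
  next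
    case False
    define r where "r = t1 / t2"
    have "homog (Suc n) P t1 t2 = t2 ^ Suc n * poly P r"
      using homog_eq[OF False P(1)] by (simp add: r_def)
    hence "poly P r = 0" using assms(2) False P(2)[of t1 t2] by simp
    then obtain Q where Q: "P = [:-r, 1:] * Q" using poly_eq_0_iff_dvd by blast
    have dQ: "degree Q \<le> n"
    proof (cases "Q = 0")
      case False
      have "degree ([:-r,1:] * Q) = degree [:-r,1:] + degree Q" by (rule degree_mult_eq) (use False in auto)
      thus ?thesis using P(1) unfolding Q[symmetric] by simp
    qed simp
    have "\<And>a b. homog (1 + n) ([:-r, 1:] * Q) a b = homog 1 [:-r, 1:] a b * homog n Q a b"
      by (rule homog_mult) (use dQ in auto)
    hence e: "\<And>a b. f a b = (a - r * b) * homog n Q a b" by (simp add: P Q homog_1 homog_Suc0)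
    have e2: "\<And>a b. f a b = (t2 * a - t1 * b) * ((1/t2) * homog n Q a b)"
      using e False by (simp add: r_def field_simps)
    have "hform n (homog n Q)" using dQ unfolding hform_def by blast
    from hform_smult[OF this, of "1/t2"] show ?thesis
      by (intro exI[of _ "\<lambda>a b. (1/t2) * homog n Q a b"] conjI e2 allI)
  qed
qed



definition prerep :: "(real \<Rightarrow> real \<Rightarrow> real) \<Rightarrow> (real \<times> real \<times> real) list \<Rightarrow> bool" where
  "prerep p rs \<longleftrightarrow> (\<forall>x y. p x y = (\<Sum>(l, a, b)\<leftarrow>rs. l * (a * x + b * y) ^ 4))"

definition LR :: "(real \<times> real \<times> real) list \<Rightarrow> (real \<Rightarrow> real \<Rightarrow> real) \<Rightarrow> real" where
  "LR rs f = (\<Sum>(l, a, b)\<leftarrow>rs. l * f a b)"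

definition good :: "(real \<times> real \<times> real) list \<Rightarrow> bool" where
  "good rs \<longleftrightarrow> honest rs \<and> (\<forall>t\<in>set rs. snd t \<noteq> (0, 0))"

definition NP :: "real \<times> real \<times> real \<Rightarrow> real \<times> real \<times> real \<Rightarrow> bool" where
  "NP u v \<longleftrightarrow> \<not> proportional (snd u) (snd v)"

lemma proportional_sym: "proportional u v \<longleftrightarrow> proportional v u"
  unfolding proportional_def by auto

lemma NP_sym: "NP u v \<longleftrightarrow> NP v u"
  unfolding NP_def using proportional_sym by blast

lemma honest_sorted: "honest R \<longleftrightarrow> sorted_wrt NP R"
proof -
  have "(\<forall>i<length R. \<forall>j<length R. i \<noteq> j \<longrightarrow> NP (R!i) (R!j)) \<longleftrightarrow> (\<forall>i j. i < j \<longrightarrow> j < length R \<longrightarrow> NP (R!i) (R!j))"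
  proof safe
    fix i j assume h: "\<forall>i j. i < j \<longrightarrow> j < length R \<longrightarrow> NP (R!i) (R!j)" "i < length R" "j < length R" "i \<noteq> j"
    show "NP (R!i) (R!j)"
    proof (cases "i < j")
      case True thus ?thesis using h by blast
    next
      case False hence "j < i" using h(4) by simp
      thus ?thesis using h NP_sym by blast
    qed
  qed auto
  thus ?thesis unfolding honest_def sorted_wrt_iff_nth_less NP_def by simp
qed

lemma not_sorted_split:
  "\<not> sorted_wrt P R \<Longrightarrow> \<exists>xs u ys v zs. R = xs @ u # ys @ v # zs \<and> \<not> P u v"
proof (induction R)
  case Nil thus ?case by simp
next
  case (Cons x R)
  show ?case
  proof (cases "\<forall>y\<in>set R. P x y")
    case True
    hence "\<not> sorted_wrt P R" using Cons.prems by simp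
    then obtain xs u ys v zs where "R = xs @ u # ys @ v # zs" "\<not> P u v" using Cons.IH by blast
    thus ?thesis by (intro exI[of _ "x # xs"]) auto
  next
    case False
    then obtain y where "y \<in> set R" "\<not> P x y" by blast
    then obtain ys zs where "R = ys @ y # zs" using split_list by metis
    thus ?thesis using \<open>\<not> P x y\<close> by (intro exI[of _ "[]"]) auto
  qed
qed

lemma prerep_append: "prerep p (xs @ ys) \<longleftrightarrow> (\<forall>x y. p x y = (\<Sum>(l, a, b)\<leftarrow>xs. l * (a * x + b * y) ^ 4) + (\<Sum>(l, a, b)\<leftarrow>ys. l * (a * x + b * y) ^ 4))"
  unfolding prerep_def by simp

lemma badge_append: "badge (xs @ ys) = (fst (badge xs) + fst (badge ys), snd (badge xs) + snd (badge ys))"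
  unfolding badge_def by simp

lemma badge_Cons: "badge (x # ys) = ((if fst x > 0 then 1 else 0) + fst (badge ys), (if fst x < 0 then 1 else 0) + snd (badge ys))"
  unfolding badge_def by simp

lemma badge_le_trans: "badge_le u v \<Longrightarrow> badge_le v w \<Longrightarrow> badge_le u w"
  unfolding badge_le_def by auto

lemma merge:
  assumes "prerep p R"
  shows "\<exists>R'. is_representation p R' \<and> good R' \<and> badge_le (badge R') (badge R) \<and> length R' \<le> length R"
  using assms
proof (induction "length R" arbitrary: R rule: less_induct)
  case less
  show ?case
  proof (cases "\<exists>t\<in>set R. fst t = 0 \<or> snd t = (0, 0)")
    case True
    then obtain t where t: "t \<in> set R" "fst t = 0 \<or> snd t = (0, 0)" by blast
    then obtain xs zs where R: "R = xs @ t # zs" using split_list by metis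
    obtain l a b where tt: "t = (l, a, b)" by (cases t) auto
    have z: "\<And>x y. l * (a * x + b * y) ^ 4 = 0" using t(2) tt by auto
    have "prerep p (xs @ zs)" using less.prems unfolding R prerep_def by (simp add: tt z)
    moreover have "length (xs @ zs) < length R" using R by simp
    ultimately obtain R' where R': "is_representation p R'" "good R'" "badge_le (badge R') (badge (xs @ zs))"
      "length R' \<le> length (xs @ zs)" using less.hyps by blast
    have "badge_le (badge (xs @ zs)) (badge R)" unfolding R badge_le_def by (simp add: badge_append badge_Cons)
    thus ?thesis using R' R by (intro exI[of _ R']) (auto intro: badge_le_trans)
  next
    case nz: False
    show ?thesis
    proof (cases "sorted_wrt NP R")
      case True
      thus ?thesis using nz less.prems
        by (intro exI[of _ R]) (auto simp: is_representation_def good_def honest_sorted prerep_def badge_le_def)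
    next
      case False
      then obtain xs u ys v zs where R: "R = xs @ u # ys @ v # zs" and pr: "\<not> NP u v"
        using not_sorted_split by blast
      obtain l1 a1 b1 where u: "u = (l1, a1, b1)" by (cases u) auto
      obtain l2 a2 b2 where v: "v = (l2, a2, b2)" by (cases v) auto
      have unz: "(a1, b1) \<noteq> (0, 0)" using nz R u by auto
      have pp: "a1 * b2 - a2 * b1 = 0" using pr u v by (simp add: NP_def proportional_def)
      obtain c where c: "a2 = c * a1" "b2 = c * b1"
      proof (cases "a1 = 0")
        case True
        hence "b1 \<noteq> 0" using unz by auto
        hence "a2 = 0" using pp True by simp
        thus ?thesis using that[of "b2 / b1"] True \<open>b1 \<noteq> 0\<close> by simp
      next
        case False
        have "b2 = (a2 / a1) * b1" using pp False by (simp add: field_simps)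
        thus ?thesis using that[of "a2 / a1"] False by simp
      qed
      define w where "w = (l1 + l2 * c ^ 4, a1, b1)"
      have ev: "\<And>x y. l1 * (a1 * x + b1 * y) ^ 4 + l2 * (a2 * x + b2 * y) ^ 4 = (l1 + l2 * c ^ 4) * (a1 * x + b1 * y) ^ 4"
      proof -
        fix x y
        have h: "a2 * x + b2 * y = c * (a1 * x + b1 * y)" unfolding c by (simp add: algebra_simps)
        have "(a2 * x + b2 * y) ^ 4 = (c * (a1 * x + b1 * y)) ^ 4" using h by simp
        also have "\<dots> = c ^ 4 * (a1 * x + b1 * y) ^ 4" by (rule power_mult_distrib)
        finally have e: "(a2 * x + b2 * y) ^ 4 = c ^ 4 * (a1 * x + b1 * y) ^ 4" .
        show "l1 * (a1 * x + b1 * y) ^ 4 + l2 * (a2 * x + b2 * y) ^ 4 = (l1 + l2 * c ^ 4) * (a1 * x + b1 * y) ^ 4"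
          unfolding e by (simp add: distrib_right)
      qed
      have "prerep p (w # xs @ ys @ zs)"
        using less.prems unfolding R prerep_def
        by (simp add: u v w_def ev[symmetric] add_ac)
      moreover have "length (w # xs @ ys @ zs) < length R" using R by simp
      ultimately obtain R' where R': "is_representation p R'" "good R'" "badge_le (badge R') (badge (w # xs @ ys @ zs))"
        "length R' \<le> length (w # xs @ ys @ zs)" using less.hyps by blast
      have c4: "c ^ 4 \<ge> 0" by (simp add: zero_le_even_power)
      have "l1 + l2 * c ^ 4 > 0 \<Longrightarrow> l1 > 0 \<or> l2 > 0"
        using c4 by (metis add_nonpos_nonpos mult_nonpos_nonneg not_le)
      moreover have "l1 + l2 * c ^ 4 < 0 \<Longrightarrow> l1 < 0 \<or> l2 < 0"
        using c4 by (metis add_nonneg_nonneg zero_le_mult_iff not_le)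
      ultimately have A: "(if l1 + l2 * c ^ 4 > 0 then 1 else 0) \<le> (if l1 > 0 then 1 else 0) + (if l2 > 0 then (1::nat) else 0)"
        and B: "(if l1 + l2 * c ^ 4 < 0 then 1 else 0) \<le> (if l1 < 0 then 1 else 0) + (if l2 < 0 then (1::nat) else 0)"
        by auto
      have "badge_le (badge (w # xs @ ys @ zs)) (badge R)"
        unfolding R badge_le_def badge_append badge_Cons using A B by (simp add: w_def u v)
      thus ?thesis using R' R by (intro exI[of _ R']) (auto intro: badge_le_trans)
    qed
  qed
qed



lemma pow_id:
  fixes c :: "nat \<Rightarrow> real"
  shows "(\<Sum>i\<le>4. c i * a ^ i * b ^ (4 - i)) =
    (c 1/8 - c 2/6 - c 3/8 + c 4) * a ^ 4 + (c 0 - c 1/2 - c 2/6 + c 3/2) * b ^ 4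
    + (- c 1/8 + c 2/12 + c 3/4) * (a + b) ^ 4 + (- c 1/24 + c 2/12 - c 3/12) * (a - b) ^ 4
    + (c 1/24 - c 3/24) * (a + 2 * b) ^ 4"
  by (simp add: eval_nat_numeral field_simps)

lemma hform4_pow:
  assumes "hform 4 f"
  shows "\<exists>w0 w1 w2 w3 w4. \<forall>a b. f a b = w0 * (a * 1 + b * 0) ^ 4 + w1 * (a * 0 + b * 1) ^ 4
     + w2 * (a * 1 + b * 1) ^ 4 + w3 * (a * 1 + b * (-1)) ^ 4 + w4 * (a * 1 + b * 2) ^ 4"
proof -
  obtain P where P: "\<And>a b. f a b = homog 4 P a b" using assms unfolding hform_def by blast
  let ?c = "coeff P"
  have "\<forall>a b. f a b = (?c 1/8 - ?c 2/6 - ?c 3/8 + ?c 4) * (a * 1 + b * 0) ^ 4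
     + (?c 0 - ?c 1/2 - ?c 2/6 + ?c 3/2) * (a * 0 + b * 1) ^ 4
     + (- ?c 1/8 + ?c 2/12 + ?c 3/4) * (a * 1 + b * 1) ^ 4 + (- ?c 1/24 + ?c 2/12 - ?c 3/12) * (a * 1 + b * (-1)) ^ 4
     + (?c 1/24 - ?c 3/24) * (a * 1 + b * 2) ^ 4"
    by (simp only: P homog_def pow_id, simp add: mult.commute)
  thus ?thesis by blast
qed

lemma LR_Nil[simp]: "LR [] f = 0" by (simp add: LR_def)
lemma LR_Cons[simp]: "LR ((l, a, b) # R) f = l * f a b + LR R f" by (simp add: LR_def)

lemma LR_add: "LR R (\<lambda>a b. f a b + g a b) = LR R f + LR R g"
  by (induction R) (auto simp: algebra_simps)

lemma LR_smult: "LR R (\<lambda>a b. c * f a b) = c * LR R f"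
  by (induction R) (auto simp: algebra_simps)

lemma LR_pow: "prerep p R \<Longrightarrow> LR R (\<lambda>a b. (a * x + b * y) ^ 4) = p x y"
  unfolding prerep_def LR_def by simp

lemma LR_hform4:
  assumes "prerep p R1" "prerep p R2" "hform 4 f"
  shows "LR R1 f = LR R2 f"
proof -
  obtain w0 w1 w2 w3 w4 where w: "\<And>a b. f a b = w0 * (a * 1 + b * 0) ^ 4 + w1 * (a * 0 + b * 1) ^ 4
     + w2 * (a * 1 + b * 1) ^ 4 + w3 * (a * 1 + b * (-1)) ^ 4 + w4 * (a * 1 + b * 2) ^ 4"
    using hform4_pow[OF assms(3)] by blast
  have e: "\<And>R. prerep p R \<Longrightarrow> LR R f = w0 * p 1 0 + w1 * p 0 1 + w2 * p 1 1 + w3 * p 1 (-1) + w4 * p 1 2"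
  proof -
    fix R assume R: "prerep p R"
    have "f = (\<lambda>a b. w0 * (a * 1 + b * 0) ^ 4 + w1 * (a * 0 + b * 1) ^ 4
     + w2 * (a * 1 + b * 1) ^ 4 + w3 * (a * 1 + b * (-1)) ^ 4 + w4 * (a * 1 + b * 2) ^ 4)"
      using w by (intro ext) simp
    thus "LR R f = w0 * p 1 0 + w1 * p 0 1 + w2 * p 1 1 + w3 * p 1 (-1) + w4 * p 1 2"
      by (simp only: LR_add LR_smult LR_pow[OF R])
  qed
  show ?thesis using e[OF assms(1)] e[OF assms(2)] by simp
qed

lemma exists_prerep:
  assumes "binary_quartic p"
  shows "\<exists>R. prerep p R"
proof -
  obtain c where c: "\<And>x y. p x y = (\<Sum>i\<le>4. c i * x ^ i * y ^ (4 - i))"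
    using assms unfolding binary_quartic_def by blast
  have c': "\<And>x y. p x y = (c 1/8 - c 2/6 - c 3/8 + c 4) * x ^ 4 + (c 0 - c 1/2 - c 2/6 + c 3/2) * y ^ 4
    + (- c 1/8 + c 2/12 + c 3/4) * (x + y) ^ 4 + (- c 1/24 + c 2/12 - c 3/12) * (x - y) ^ 4
    + (c 1/24 - c 3/24) * (x + 2 * y) ^ 4" using c pow_id by simp
  show ?thesis
    by (intro exI[of _ "[(c 1/8 - c 2/6 - c 3/8 + c 4, 1, 0), (c 0 - c 1/2 - c 2/6 + c 3/2, 0, 1),
         (- c 1/8 + c 2/12 + c 3/4, 1, 1), (- c 1/24 + c 2/12 - c 3/12, 1, -1), (c 1/24 - c 3/24, 1, 2)]"])
       (simp add: prerep_def c')
qed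

definition negR :: "(real \<times> real \<times> real) list \<Rightarrow> (real \<times> real \<times> real) list" where
  "negR R = map (\<lambda>(l, a, b). (- l, a, b)) R"

lemma negR_negR[simp]: "negR (negR R) = R"
  unfolding negR_def by (induction R) auto

lemma length_negR[simp]: "length (negR R) = length R" by (simp add: negR_def)

lemma prerep_negR: "prerep p R \<Longrightarrow> prerep (\<lambda>x y. - p x y) (negR R)"
proof -
  have "\<And>x y. (\<Sum>(l, a, b)\<leftarrow>negR R. l * (a * x + b * y) ^ 4) = - (\<Sum>(l, a, b)\<leftarrow>R. l * (a * x + b * y) ^ 4)"
    unfolding negR_def by (induction R) auto
  thus "prerep p R \<Longrightarrow> prerep (\<lambda>x y. - p x y) (negR R)" unfolding prerep_def by simp
qed

lemma good_negR: "good (negR R) \<longleftrightarrow> good R"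
proof -
  have "sorted_wrt NP (negR R) \<longleftrightarrow> sorted_wrt NP R"
    unfolding negR_def by (induction R) (auto simp: NP_def)
  moreover have "(\<forall>t\<in>set (negR R). snd t \<noteq> (0, 0)) \<longleftrightarrow> (\<forall>t\<in>set R. snd t \<noteq> (0, 0))"
    unfolding negR_def by auto
  ultimately show ?thesis unfolding good_def honest_sorted by simp
qed

lemma badge_negR: "badge (negR R) = (snd (badge R), fst (badge R))"
  unfolding badge_def negR_def by (induction R) auto

lemma is_rep_negR: "is_representation p R \<Longrightarrow> is_representation (\<lambda>x y. - p x y) (negR R)"
proof -
  assume a: "is_representation p R"
  hence "prerep p R" unfolding is_representation_def prerep_def by simp
  hence "prerep (\<lambda>x y. - p x y) (negR R)" by (rule prerep_negR)
  moreover have "\<forall>t\<in>set (negR R). fst t \<noteq> 0" using a unfolding is_representation_def negR_def by auto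
  ultimately show ?thesis unfolding is_representation_def prerep_def by simp
qed

lemma is_rep_prerep: "is_representation p R \<Longrightarrow> prerep p R"
  unfolding is_representation_def prerep_def by simp



lemma cross_sol:
  fixes A0 A1 A2 B0 B1 B2 :: real
  shows "\<exists>g0 g1 g2. (g0, g1, g2) \<noteq> (0, 0, 0) \<and> A0 * g0 + A1 * g1 + A2 * g2 = 0 \<and> B0 * g0 + B1 * g1 + B2 * g2 = 0"
proof -
  define c0 where "c0 = A1 * B2 - A2 * B1"
  define c1 where "c1 = A2 * B0 - A0 * B2"
  define c2 where "c2 = A0 * B1 - A1 * B0"
  show ?thesis
  proof (cases "(c0, c1, c2) \<noteq> (0, 0, 0)")
    case True
    have "(c0, c1, c2) \<noteq> (0, 0, 0) \<and> A0 * c0 + A1 * c1 + A2 * c2 = 0 \<and> B0 * c0 + B1 * c1 + B2 * c2 = 0"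
      using True by (simp add: c0_def c1_def c2_def algebra_simps)
    thus ?thesis by blast
  next
    case False
    hence cz: "c0 = 0" "c1 = 0" "c2 = 0" by auto
    have single: "\<exists>g0 g1 g2. (g0, g1, g2) \<noteq> (0, 0, 0) \<and> X0 * g0 + X1 * g1 + X2 * g2 = 0" for X0 X1 X2 :: real
    proof (cases "X0 = 0 \<and> X1 = 0")
      case True
      have "(1::real, 0::real, 0::real) \<noteq> (0, 0, 0) \<and> X0 * 1 + X1 * 0 + X2 * 0 = 0" using True by simp
      thus ?thesis by blast
    next
      case False
      have "(X1, -X0, 0::real) \<noteq> (0, 0, 0) \<and> X0 * X1 + X1 * (-X0) + X2 * 0 = 0" using False by auto
      thus ?thesis by blast
    qed
    show ?thesis
    proof (cases "A0 = 0 \<and> A1 = 0 \<and> A2 = 0")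
      case True
      obtain g0 g1 g2 where "(g0, g1, g2) \<noteq> (0, 0, 0)" "B0 * g0 + B1 * g1 + B2 * g2 = 0"
        using single[of B0 B1 B2] by blast
      hence "(g0, g1, g2) \<noteq> (0, 0, 0) \<and> A0 * g0 + A1 * g1 + A2 * g2 = 0 \<and> B0 * g0 + B1 * g1 + B2 * g2 = 0"
        using True by simp
      thus ?thesis by blast
    next
      case Anz: False
      obtain g0 g1 g2 where g: "(g0, g1, g2) \<noteq> (0, 0, 0)" "A0 * g0 + A1 * g1 + A2 * g2 = 0"
        using single[of A0 A1 A2] by blast
      have "B0 * g0 + B1 * g1 + B2 * g2 = 0"
      proof -
        have "A0 * (B0 * g0 + B1 * g1 + B2 * g2) = B0 * (A0 * g0 + A1 * g1 + A2 * g2) + c2 * g1 - c1 * g2"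
          unfolding c1_def c2_def by (simp add: algebra_simps)
        moreover have "A1 * (B0 * g0 + B1 * g1 + B2 * g2) = B1 * (A0 * g0 + A1 * g1 + A2 * g2) - c2 * g0 + c0 * g2"
          unfolding c0_def c2_def by (simp add: algebra_simps)
        moreover have "A2 * (B0 * g0 + B1 * g1 + B2 * g2) = B2 * (A0 * g0 + A1 * g1 + A2 * g2) + c1 * g0 - c0 * g1"
          unfolding c0_def c1_def by (simp add: algebra_simps)
        ultimately show ?thesis using g(2) Anz cz by auto
      qed
      with g have "(g0, g1, g2) \<noteq> (0, 0, 0) \<and> A0 * g0 + A1 * g1 + A2 * g2 = 0 \<and> B0 * g0 + B1 * g1 + B2 * g2 = 0"
        by simp
      thus ?thesis by blast
    qed
  qed
qed



lemma hform_ext: "hform n f \<Longrightarrow> (\<And>a b. f a b = g a b) \<Longrightarrow> hform n g"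
proof -
  assume "hform n f" "\<And>a b. f a b = g a b"
  moreover have "f = g" using \<open>\<And>a b. f a b = g a b\<close> by (intro ext)
  ultimately show ?thesis by simp
qed

lemma hform_linf: "hform 1 (\<lambda>a b. w2 * a - w1 * b)"
  by (rule hform_ext[OF hform_lin[of w2 "-w1"]]) simp

lemma hform_quad: "hform 2 (\<lambda>a b. g2 * a ^ 2 + g1 * a * b + g0 * b ^ 2)"
  unfolding hform_def
  by (intro exI[of _ "[:g0, g1, g2:]"]) (auto simp: homog_def eval_nat_numeral algebra_simps)

lemma hform_pow4: "hform 4 (\<lambda>a b. (a * x + b * y) ^ 4)"
proof -
  have h1: "hform 1 (\<lambda>a b. x * a + y * b)" by (rule hform_lin)
  have h2: "hform 2 (\<lambda>a b. (x * a + y * b) * (x * a + y * b))" using hform_mult[OF h1 h1] by (simp add: numeral_2_eq_2)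
  have "hform 4 (\<lambda>a b. ((x * a + y * b) * (x * a + y * b)) * ((x * a + y * b) * (x * a + y * b)))"
    using hform_mult[OF h2 h2] by simp
  thus ?thesis by (rule hform_ext) (simp add: algebra_simps eval_nat_numeral)
qed

lemma prop_trans_raw:
  fixes v1 v2 a1 b1 a2 b2 :: real
  assumes "(v1, v2) \<noteq> (0, 0)" "a1 * v2 - v1 * b1 = 0" "a2 * v2 - v1 * b2 = 0"
  shows "a1 * b2 - a2 * b1 = 0"
proof (cases "v2 = 0")
  case True
  hence "v1 \<noteq> 0" using assms(1) by auto
  hence "b1 = 0" "b2 = 0" using assms True by auto
  thus ?thesis by simp
next
  case False
  have "a1 = v1 * b1 / v2" "a2 = v1 * b2 / v2" using assms False by (auto simp: field_simps)
  thus ?thesis by (simp add: field_simps)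
qed

lemma prop_scale:
  fixes s1 s2 u1 u2 :: real
  assumes "(s1, s2) \<noteq> (0, 0)" "s2 * u1 - s1 * u2 = 0"
  shows "\<exists>k. u1 = k * s1 \<and> u2 = k * s2"
proof (cases "s1 = 0")
  case True
  hence "s2 \<noteq> 0" using assms by auto
  hence "u1 = 0" using assms True by simp
  thus ?thesis using True \<open>s2 \<noteq> 0\<close> by (intro exI[of _ "u2 / s2"]) simp
next
  case False
  have "u2 = (u1 / s1) * s2" using assms False by (simp add: field_simps)
  thus ?thesis using False by (intro exI[of _ "u1 / s1"]) simp
qed

lemma Q3:
  fixes a1 b1 a2 b2 a3 b3 :: real
  assumes "hform 2 G" "(a1, b1) \<noteq> (0, 0)" "(a2, b2) \<noteq> (0, 0)"
    "a1 * b2 - a2 * b1 \<noteq> 0" "a1 * b3 - a3 * b1 \<noteq> 0" "a2 * b3 - a3 * b2 \<noteq> 0"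
    "G a1 b1 = 0" "G a2 b2 = 0" "G a3 b3 = 0"
  shows "G a b = 0"
proof -
  obtain G1 where G1: "hform 1 G1" "\<And>a b. G a b = (b1 * a - a1 * b) * G1 a b"
    using hform_div[of 1 G a1 b1] assms by (auto simp: numeral_2_eq_2)
  have "(b1 * a2 - a1 * b2) * G1 a2 b2 = 0" using G1(2) assms(8) by metis
  moreover have "b1 * a2 - a1 * b2 \<noteq> 0" using assms(4) by (simp add: algebra_simps)
  ultimately have "G1 a2 b2 = 0" by simp
  then obtain G0 where G0: "hform 0 G0" "\<And>a b. G1 a b = (b2 * a - a2 * b) * G0 a b"
    using hform_div[of 0 G1 a2 b2] G1(1) assms(3) by auto
  obtain c where c: "\<And>a b. G0 a b = c" using hform0_E[OF G0(1)] by blast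
  have "(b1 * a3 - a1 * b3) * ((b2 * a3 - a2 * b3) * c) = 0" using assms(9) G1(2) G0(2) c by metis
  moreover have "b1 * a3 - a1 * b3 \<noteq> 0" "b2 * a3 - a2 * b3 \<noteq> 0" using assms(5,6) by (simp_all add: algebra_simps)
  ultimately have "c = 0" by simp
  thus ?thesis using G1(2) G0(2) c by simp
qed

lemma quad_roots:
  fixes g0 g1 g2 :: real
  assumes "g1 ^ 2 - 4 * g0 * g2 > 0"
  shows "\<exists>u1 u2 v1 v2. (u1, u2) \<noteq> (0, 0) \<and> (v1, v2) \<noteq> (0, 0) \<and> u1 * v2 - v1 * u2 \<noteq> 0 \<and>
     g2 * u1 ^ 2 + g1 * u1 * u2 + g0 * u2 ^ 2 = 0 \<and> g2 * v1 ^ 2 + g1 * v1 * v2 + g0 * v2 ^ 2 = 0"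
proof (cases "g2 = 0")
  case True
  hence "g1 \<noteq> 0" using assms by auto
  have "(1::real, 0::real) \<noteq> (0, 0) \<and> (-g0, g1) \<noteq> (0, 0) \<and> 1 * g1 - (-g0) * 0 \<noteq> 0 \<and>
     g2 * 1 ^ 2 + g1 * 1 * 0 + g0 * 0 ^ 2 = 0 \<and> g2 * (-g0) ^ 2 + g1 * (-g0) * g1 + g0 * g1 ^ 2 = 0"
    using True \<open>g1 \<noteq> 0\<close> by (simp add: power2_eq_square)
  thus ?thesis by blast
next
  case False
  define D where "D = g1 ^ 2 - 4 * g0 * g2"
  have D: "D > 0" using assms D_def by simp
  define r where "r = sqrt D"
  have r: "r > 0" "r ^ 2 = D" using D by (auto simp: r_def)
  have "(-g1 + r, 2 * g2) \<noteq> (0, 0) \<and> (-g1 - r, 2 * g2) \<noteq> (0, 0) \<and> (-g1 + r) * (2 * g2) - (-g1 - r) * (2 * g2) \<noteq> 0 \<and>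
     g2 * (-g1 + r) ^ 2 + g1 * (-g1 + r) * (2 * g2) + g0 * (2 * g2) ^ 2 = 0 \<and>
     g2 * (-g1 - r) ^ 2 + g1 * (-g1 - r) * (2 * g2) + g0 * (2 * g2) ^ 2 = 0"
  proof (intro conjI)
    show "(-g1 + r) * (2 * g2) - (-g1 - r) * (2 * g2) \<noteq> 0" using False r by (simp add: algebra_simps)
    have "g2 * (-g1 + r) ^ 2 + g1 * (-g1 + r) * (2 * g2) + g0 * (2 * g2) ^ 2 = g2 * (r ^ 2 - (g1 ^ 2 - 4 * g0 * g2))"
      by (simp add: power2_eq_square algebra_simps)
    thus "g2 * (-g1 + r) ^ 2 + g1 * (-g1 + r) * (2 * g2) + g0 * (2 * g2) ^ 2 = 0"
      using r(2) unfolding D_def by simp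
    have "g2 * (-g1 - r) ^ 2 + g1 * (-g1 - r) * (2 * g2) + g0 * (2 * g2) ^ 2 = g2 * (r ^ 2 - (g1 ^ 2 - 4 * g0 * g2))"
      by (simp add: power2_eq_square algebra_simps)
    thus "g2 * (-g1 - r) ^ 2 + g1 * (-g1 - r) * (2 * g2) + g0 * (2 * g2) ^ 2 = 0"
      using r(2) unfolding D_def by simp
  qed (use False in auto)
  thus ?thesis by blast
qed

lemma quad_semidef:
  fixes g0 g1 g2 :: real
  assumes "g1 ^ 2 - 4 * g0 * g2 \<le> 0"
  shows "(\<forall>a b. g2 * a ^ 2 + g1 * a * b + g0 * b ^ 2 \<ge> 0) \<or> (\<forall>a b. g2 * a ^ 2 + g1 * a * b + g0 * b ^ 2 \<le> 0)"
proof (cases "g2 = 0")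
  case True
  hence "g1 * g1 \<le> 0" using assms by (simp add: power2_eq_square)
  hence "g1 * g1 = 0" using zero_le_square[of g1] by linarith
  hence "g1 = 0" by simp
  thus ?thesis using True by (cases "g0 \<ge> 0") (auto intro: mult_nonneg_nonneg mult_nonpos_nonneg simp: zero_le_square)
next
  case False
  have id: "4 * g2 * (g2 * a ^ 2 + g1 * a * b + g0 * b ^ 2) = (2 * g2 * a + g1 * b) ^ 2 + (4 * g0 * g2 - g1 ^ 2) * b ^ 2" for a b
    by (simp add: power2_eq_square algebra_simps)
  have nn: "(2 * g2 * a + g1 * b) ^ 2 + (4 * g0 * g2 - g1 ^ 2) * b ^ 2 \<ge> 0" for a b
    using assms by (intro add_nonneg_nonneg) auto
  show ?thesis
  proof (cases "g2 > 0")
    case True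
    have "g2 * a ^ 2 + g1 * a * b + g0 * b ^ 2 \<ge> 0" for a b
    proof -
      have "0 \<le> (4 * g2) * (g2 * a ^ 2 + g1 * a * b + g0 * b ^ 2)" using id[of a b] nn[of a b] by linarith
      thus ?thesis using True zero_le_mult_iff[of "4 * g2" "g2 * a ^ 2 + g1 * a * b + g0 * b ^ 2"] by auto
    qed
    thus ?thesis by blast
  next
    case False
    hence "g2 < 0" using \<open>g2 \<noteq> 0\<close> by simp
    have "g2 * a ^ 2 + g1 * a * b + g0 * b ^ 2 \<le> 0" for a b
    proof -
      have "0 \<le> (4 * g2) * (g2 * a ^ 2 + g1 * a * b + g0 * b ^ 2)" using id[of a b] nn[of a b] by linarith
      thus ?thesis using \<open>g2 < 0\<close> zero_le_mult_iff[of "4 * g2" "g2 * a ^ 2 + g1 * a * b + g0 * b ^ 2"] by auto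
    qed
    thus ?thesis by blast
  qed
qed



lemma lemmaT_np:
  fixes l1 l2 l3 a1 b1 a2 b2 a3 b3 s1 s2 :: real
  assumes l: "l1 > 0" "l2 > 0" "l3 > 0"
  and nz: "(a1, b1) \<noteq> (0, 0)" "(a2, b2) \<noteq> (0, 0)" "(a3, b3) \<noteq> (0, 0)" "(s1, s2) \<noteq> (0, 0)"
  and np: "a1 * b2 - a2 * b1 \<noteq> 0" "a1 * b3 - a3 * b1 \<noteq> 0" "a2 * b3 - a3 * b2 \<noteq> 0"
  and nt: "s2 * a1 - s1 * b1 \<noteq> 0" "s2 * a2 - s1 * b2 \<noteq> 0" "s2 * a3 - s1 * b3 \<noteq> 0"
  shows "\<exists>u1 u2 v1 v2 nt nu nv. nt \<ge> 0 \<and> nu \<ge> 0 \<and> nv \<ge> 0 \<and>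
    (\<forall>x y. l1 * (a1 * x + b1 * y) ^ 4 + l2 * (a2 * x + b2 * y) ^ 4 + l3 * (a3 * x + b3 * y) ^ 4
       = nt * (s1 * x + s2 * y) ^ 4 + nu * (u1 * x + u2 * y) ^ 4 + nv * (v1 * x + v2 * y) ^ 4)"
proof -
  define Lf where "Lf = (\<lambda>f::real \<Rightarrow> real \<Rightarrow> real. l1 * f a1 b1 + l2 * f a2 b2 + l3 * f a3 b3)"
  define mt where "mt = (\<lambda>a b::real. s2 * a - s1 * b)"
  have mtP: "mt a1 b1 \<noteq> 0" "mt a2 b2 \<noteq> 0" "mt a3 b3 \<noteq> 0" using nt by (simp_all add: mt_def)
  obtain g0 g1 g2 where gnz: "(g0, g1, g2) \<noteq> (0, 0, 0)"
    and gA: "Lf (\<lambda>a b. mt a b * b ^ 2 * a) * g0 + Lf (\<lambda>a b. mt a b * (a * b) * a) * g1 + Lf (\<lambda>a b. mt a b * a ^ 2 * a) * g2 = 0"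
    and gB: "Lf (\<lambda>a b. mt a b * b ^ 2 * b) * g0 + Lf (\<lambda>a b. mt a b * (a * b) * b) * g1 + Lf (\<lambda>a b. mt a b * a ^ 2 * b) * g2 = 0"
    using cross_sol by blast
  define G where "G = (\<lambda>a b::real. g2 * a ^ 2 + g1 * a * b + g0 * b ^ 2)"
  have hG: "hform 2 G" unfolding G_def by (rule hform_quad)
  have Gnz: "\<exists>a b. G a b \<noteq> 0"
  proof (rule ccontr)
    assume "\<not> ?thesis"
    hence "G 1 0 = 0" "G 0 1 = 0" "G 1 1 = 0" by auto
    hence "g2 = 0" "g0 = 0" "g1 = 0" unfolding G_def by auto
    thus False using gnz by simp
  qed
  have Elin: "Lf (\<lambda>a b. mt a b * G a b * (r1 * a + r2 * b)) = 0" for r1 r2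
  proof -
    have "Lf (\<lambda>a b. mt a b * G a b * (r1 * a + r2 * b)) =
      r1 * (Lf (\<lambda>a b. mt a b * b ^ 2 * a) * g0 + Lf (\<lambda>a b. mt a b * (a * b) * a) * g1 + Lf (\<lambda>a b. mt a b * a ^ 2 * a) * g2)
      + r2 * (Lf (\<lambda>a b. mt a b * b ^ 2 * b) * g0 + Lf (\<lambda>a b. mt a b * (a * b) * b) * g1 + Lf (\<lambda>a b. mt a b * a ^ 2 * b) * g2)"
      unfolding Lf_def G_def by (simp add: algebra_simps)
    thus ?thesis using gA gB by simp
  qed
  have E3: "l1 * (mt a1 b1 ^ 2 * G a1 b1) + l2 * (mt a2 b2 ^ 2 * G a2 b2) + l3 * (mt a3 b3 ^ 2 * G a3 b3) = 0"
  proof -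
    have "Lf (\<lambda>a b. mt a b * G a b * (s2 * a + (- s1) * b)) = 0" by (rule Elin)
    thus ?thesis unfolding Lf_def by (simp add: mt_def power2_eq_square algebra_simps)
  qed
  have Dpos: "g1 ^ 2 - 4 * g0 * g2 > 0"
  proof (rule ccontr)
    assume "\<not> ?thesis"
    hence sd: "(\<forall>a b. G a b \<ge> 0) \<or> (\<forall>a b. G a b \<le> 0)" using quad_semidef unfolding G_def by auto
    have sq: "mt a1 b1 ^ 2 > 0" "mt a2 b2 ^ 2 > 0" "mt a3 b3 ^ 2 > 0" using mtP by auto
    have "G a1 b1 = 0 \<and> G a2 b2 = 0 \<and> G a3 b3 = 0"
    proof (cases "\<forall>a b. G a b \<ge> 0")
      case True
      have t: "l1 * (mt a1 b1 ^ 2 * G a1 b1) \<ge> 0" "l2 * (mt a2 b2 ^ 2 * G a2 b2) \<ge> 0" "l3 * (mt a3 b3 ^ 2 * G a3 b3) \<ge> 0"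
        using True l sq by (simp_all add: less_imp_le)
      hence "l1 * (mt a1 b1 ^ 2 * G a1 b1) = 0" "l2 * (mt a2 b2 ^ 2 * G a2 b2) = 0" "l3 * (mt a3 b3 ^ 2 * G a3 b3) = 0"
        using E3 by linarith+
      thus ?thesis using l mtP by simp_all
    next
      case False
      hence True: "\<forall>a b. G a b \<le> 0" using sd by blast
      have t: "l1 * (mt a1 b1 ^ 2 * G a1 b1) \<le> 0" "l2 * (mt a2 b2 ^ 2 * G a2 b2) \<le> 0" "l3 * (mt a3 b3 ^ 2 * G a3 b3) \<le> 0"
        using True l sq by (simp_all add: mult_nonneg_nonpos less_imp_le)
      hence "l1 * (mt a1 b1 ^ 2 * G a1 b1) = 0" "l2 * (mt a2 b2 ^ 2 * G a2 b2) = 0" "l3 * (mt a3 b3 ^ 2 * G a3 b3) = 0"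
        using E3 by linarith+
      thus ?thesis using l mtP by simp_all
    qed
    hence "\<forall>a b. G a b = 0" using Q3[OF hG nz(1,2) np] by blast
    thus False using Gnz by blast
  qed
  obtain u1 u2 v1 v2 where uv: "(u1, u2) \<noteq> (0, 0)" "(v1, v2) \<noteq> (0, 0)" "u1 * v2 - v1 * u2 \<noteq> 0"
    "G u1 u2 = 0" "G v1 v2 = 0"
    using quad_roots[OF Dpos] unfolding G_def by blast
  define mu where "mu = (\<lambda>a b::real. u2 * a - u1 * b)"
  define mv where "mv = (\<lambda>a b::real. v2 * a - v1 * b)"
  obtain c where Gc: "\<And>a b. G a b = mu a b * mv a b * c"
  proof -
    obtain G1 where G1: "hform 1 G1" "\<And>a b. G a b = mu a b * G1 a b"
      using hform_div[of 1 G u1 u2] hG uv(1,4) by (auto simp: numeral_2_eq_2 mu_def)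
    have "mu v1 v2 \<noteq> 0" using uv(3) by (simp add: mu_def algebra_simps)
    hence "G1 v1 v2 = 0" using G1(2)[of v1 v2] uv(5) by simp
    then obtain G0 where G0: "hform 0 G0" "\<And>a b. G1 a b = mv a b * G0 a b"
      using hform_div[of 0 G1 v1 v2] G1(1) uv(2) by (auto simp: mv_def)
    obtain c0 where c0: "\<And>a b. G0 a b = c0" using hform0_E[OF G0(1)] by blast
    have "\<And>a b. G a b = mu a b * mv a b * c0" using G1(2) G0(2) c0 by (simp add: mult_ac)
    thus ?thesis by (rule that)
  qed
  have cnz: "c \<noteq> 0" using Gnz Gc by auto
  have key: "s2 * w1 - s1 * w2 \<noteq> 0"
    if w: "(w1, w2) \<noteq> (0, 0)" "(z1, z2) \<noteq> (0, 0)" "\<And>a b. G a b = (w2 * a - w1 * b) * (z2 * a - z1 * b) * c"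
    for w1 w2 z1 z2
  proof
    assume "s2 * w1 - s1 * w2 = 0"
    then obtain k where k: "w1 = k * s1" "w2 = k * s2" using prop_scale nz(4) by blast
    have knz: "k \<noteq> 0" using w(1) k by auto
    have "Lf (\<lambda>a b. mt a b * G a b * (z2 * a + (- z1) * b)) = 0" by (rule Elin)
    hence "(c * k) * (l1 * (mt a1 b1 * (z2 * a1 - z1 * b1)) ^ 2 + l2 * (mt a2 b2 * (z2 * a2 - z1 * b2)) ^ 2
        + l3 * (mt a3 b3 * (z2 * a3 - z1 * b3)) ^ 2) = 0"
      unfolding Lf_def w(3) k by (simp add: mt_def power2_eq_square algebra_simps)
    hence s0: "l1 * (mt a1 b1 * (z2 * a1 - z1 * b1)) ^ 2 + l2 * (mt a2 b2 * (z2 * a2 - z1 * b2)) ^ 2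
        + l3 * (mt a3 b3 * (z2 * a3 - z1 * b3)) ^ 2 = 0" using cnz knz by simp
    have "l1 * (mt a1 b1 * (z2 * a1 - z1 * b1)) ^ 2 \<ge> 0" "l2 * (mt a2 b2 * (z2 * a2 - z1 * b2)) ^ 2 \<ge> 0"
      "l3 * (mt a3 b3 * (z2 * a3 - z1 * b3)) ^ 2 \<ge> 0" using l by simp_all
    hence e1: "l1 * (mt a1 b1 * (z2 * a1 - z1 * b1)) ^ 2 = 0" and e2: "l2 * (mt a2 b2 * (z2 * a2 - z1 * b2)) ^ 2 = 0"
      using s0 by linarith+
    have z1: "z2 * a1 - z1 * b1 = 0" using e1 l(1) mtP(1) by simp
    have z2: "z2 * a2 - z1 * b2 = 0" using e2 l(2) mtP(2) by simp
    have "a1 * z2 - z1 * b1 = 0" using z1 by (metis mult.commute)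
    moreover have "a2 * z2 - z1 * b2 = 0" using z2 by (metis mult.commute)
    ultimately have "a1 * b2 - a2 * b1 = 0" by (rule prop_trans_raw[OF w(2)])
    thus False using np(1) by simp
  qed
  have ut: "s2 * u1 - s1 * u2 \<noteq> 0" by (rule key[OF uv(1,2)]) (simp add: Gc mu_def mv_def)
  have vt: "s2 * v1 - s1 * v2 \<noteq> 0" by (rule key[OF uv(2,1)]) (simp add: Gc mu_def mv_def mult_ac)
  define qt where "qt = (\<lambda>a b. mu a b * mv a b)"
  define qu where "qu = (\<lambda>a b. mt a b * mv a b)"
  define qv where "qv = (\<lambda>a b. mt a b * mu a b)"
  have "mu s1 s2 = - (s2 * u1 - s1 * u2)" "mv s1 s2 = - (s2 * v1 - s1 * v2)" by (simp_all add: mu_def mv_def algebra_simps)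
  hence qt0: "qt s1 s2 \<noteq> 0" using ut vt by (simp add: qt_def)
  have "mt u1 u2 = s2 * u1 - s1 * u2" "mv u1 u2 = u1 * v2 - v1 * u2" by (simp_all add: mt_def mv_def algebra_simps)
  hence qu0: "qu u1 u2 \<noteq> 0" using ut uv(3) by (simp add: qu_def)
  have "mt v1 v2 = s2 * v1 - s1 * v2" "mu v1 v2 = - (u1 * v2 - v1 * u2)" by (simp_all add: mt_def mu_def algebra_simps)
  hence qv0: "qv v1 v2 \<noteq> 0" using vt uv(3) by (simp add: qv_def)
  have hq: "hform 4 (\<lambda>a b. (f1 a b * f2 a b) * (f1 a b * f2 a b))" if "hform 1 f1" "hform 1 f2" for f1 f2
  proof -
    have "hform 2 (\<lambda>a b. f1 a b * f2 a b)" using hform_mult[OF that] by (simp add: numeral_2_eq_2)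
    from hform_mult[OF this this] show ?thesis by simp
  qed
  have hmt: "hform 1 mt" "hform 1 mu" "hform 1 mv" unfolding mt_def mu_def mv_def by (rule hform_linf)+
  have hqt: "hform 4 (\<lambda>a b. qt a b * qt a b)" unfolding qt_def by (rule hq[OF hmt(2,3)])
  have hqu: "hform 4 (\<lambda>a b. qu a b * qu a b)" unfolding qu_def by (rule hq[OF hmt(1,3)])
  have hqv: "hform 4 (\<lambda>a b. qv a b * qv a b)" unfolding qv_def by (rule hq[OF hmt(1,2)])
  define nt where "nt = Lf (\<lambda>a b. qt a b * qt a b) / (qt s1 s2 * qt s1 s2)"
  define nu where "nu = Lf (\<lambda>a b. qu a b * qu a b) / (qu u1 u2 * qu u1 u2)"
  define nv where "nv = Lf (\<lambda>a b. qv a b * qv a b) / (qv v1 v2 * qv v1 v2)"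
  have Lsq: "Lf (\<lambda>a b. q a b * q a b) \<ge> 0" for q
  proof -
    have sq: "0 \<le> q a b * q a b" for a b by simp
    have "0 \<le> l1 * (q a1 b1 * q a1 b1)" "0 \<le> l2 * (q a2 b2 * q a2 b2)" "0 \<le> l3 * (q a3 b3 * q a3 b3)"
      using l sq by (simp_all add: less_imp_le)
    thus ?thesis unfolding Lf_def by linarith
  qed
  have nn: "nt \<ge> 0" "nu \<ge> 0" "nv \<ge> 0" unfolding nt_def nu_def nv_def using Lsq by simp_all
  have main: "l1 * (a1 * x + b1 * y) ^ 4 + l2 * (a2 * x + b2 * y) ^ 4 + l3 * (a3 * x + b3 * y) ^ 4
       = nt * (s1 * x + s2 * y) ^ 4 + nu * (u1 * x + u2 * y) ^ 4 + nv * (v1 * x + v2 * y) ^ 4" for x y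
  proof -
    define ph where "ph = (\<lambda>a b::real. (a * x + b * y) ^ 4)"
    define F where "F = (\<lambda>a b. ph a b - (ph s1 s2 / (qt s1 s2 * qt s1 s2)) * (qt a b * qt a b)
       - (ph u1 u2 / (qu u1 u2 * qu u1 u2)) * (qu a b * qu a b) - (ph v1 v2 / (qv v1 v2 * qv v1 v2)) * (qv a b * qv a b))"
    have hF: "hform 4 F" unfolding F_def ph_def
      by (intro hform_diff hform_smult hform_pow4 hqt hqu hqv)
    have F1: "F s1 s2 = 0" using qt0 by (simp add: F_def qu_def qv_def mt_def)
    have F2: "F u1 u2 = 0" using qu0 by (simp add: F_def qt_def qv_def mu_def)
    have F3: "F v1 v2 = 0" using qv0 by (simp add: F_def qt_def qu_def mv_def)
    obtain H3 where H3: "hform 3 H3" "\<And>a b. F a b = mt a b * H3 a b"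
      using hform_div[of 3 F s1 s2] hF F1 nz(4) by (auto simp: eval_nat_numeral mt_def)
    have "mt u1 u2 \<noteq> 0" using ut by (simp add: mt_def)
    hence "H3 u1 u2 = 0" using H3(2)[of u1 u2] F2 by simp
    then obtain H2 where H2: "hform 2 H2" "\<And>a b. H3 a b = mu a b * H2 a b"
      using hform_div[of 2 H3 u1 u2] H3(1) uv(1) by (auto simp: eval_nat_numeral mu_def)
    have "mt v1 v2 \<noteq> 0" "mu v1 v2 \<noteq> 0" using vt uv(3) by (simp_all add: mt_def mu_def algebra_simps)
    hence "H2 v1 v2 = 0" using H3(2)[of v1 v2] H2(2)[of v1 v2] F3 by simp
    then obtain H1 where H1: "hform 1 H1" "\<And>a b. H2 a b = mv a b * H1 a b"
      using hform_div[of 1 H2 v1 v2] H2(1) uv(2) by (auto simp: numeral_2_eq_2 mv_def)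
    obtain r1 r2 where r: "\<And>a b. H1 a b = r1 * a + r2 * b" using hform1_E[OF H1(1)] by blast
    have Fe: "F a b = (1 / c) * (mt a b * G a b * (r1 * a + r2 * b))" for a b
      using cnz by (simp add: H3(2) H2(2) H1(2) r Gc)
    have "Lf F = (1 / c) * Lf (\<lambda>a b. mt a b * G a b * (r1 * a + r2 * b))"
      unfolding Lf_def Fe by (simp add: algebra_simps)
    hence LF0: "Lf F = 0" using Elin by simp
    have "Lf F = Lf ph - (ph s1 s2 / (qt s1 s2 * qt s1 s2)) * Lf (\<lambda>a b. qt a b * qt a b)
       - (ph u1 u2 / (qu u1 u2 * qu u1 u2)) * Lf (\<lambda>a b. qu a b * qu a b)
       - (ph v1 v2 / (qv v1 v2 * qv v1 v2)) * Lf (\<lambda>a b. qv a b * qv a b)"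
      unfolding Lf_def F_def by (simp add: algebra_simps)
    hence "Lf ph = nt * ph s1 s2 + nu * ph u1 u2 + nv * ph v1 v2"
      using LF0 unfolding nt_def nu_def nv_def by (simp add: field_simps)
    thus ?thesis unfolding Lf_def ph_def by simp
  qed
  show ?thesis using nn main by blast
qed



lemma pow4_scale: "((k * s1) * x + (k * s2) * y) ^ 4 = k ^ 4 * (s1 * x + s2 * y) ^ 4" for k s1 s2 x y :: real
proof -
  have "(k * s1) * x + (k * s2) * y = k * (s1 * x + s2 * y)" by (simp add: algebra_simps)
  thus ?thesis by (simp add: power_mult_distrib)
qed

lemma lemmaT:
  fixes l1 l2 l3 a1 b1 a2 b2 a3 b3 s1 s2 :: real
  assumes l: "l1 > 0" "l2 > 0" "l3 > 0"
  and nz: "(a1, b1) \<noteq> (0, 0)" "(a2, b2) \<noteq> (0, 0)" "(a3, b3) \<noteq> (0, 0)" "(s1, s2) \<noteq> (0, 0)"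
  and np: "a1 * b2 - a2 * b1 \<noteq> 0" "a1 * b3 - a3 * b1 \<noteq> 0" "a2 * b3 - a3 * b2 \<noteq> 0"
  shows "\<exists>u1 u2 v1 v2 nt nu nv. nt \<ge> 0 \<and> nu \<ge> 0 \<and> nv \<ge> 0 \<and>
    (\<forall>x y. l1 * (a1 * x + b1 * y) ^ 4 + l2 * (a2 * x + b2 * y) ^ 4 + l3 * (a3 * x + b3 * y) ^ 4
       = nt * (s1 * x + s2 * y) ^ 4 + nu * (u1 * x + u2 * y) ^ 4 + nv * (v1 * x + v2 * y) ^ 4)"
proof (cases "s2 * a1 - s1 * b1 = 0")
  case True
  then obtain k where k: "a1 = k * s1" "b1 = k * s2" using prop_scale[OF nz(4)] by blast
  have "\<forall>x y. l1 * (a1 * x + b1 * y) ^ 4 + l2 * (a2 * x + b2 * y) ^ 4 + l3 * (a3 * x + b3 * y) ^ 4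
       = (l1 * k ^ 4) * (s1 * x + s2 * y) ^ 4 + l2 * (a2 * x + b2 * y) ^ 4 + l3 * (a3 * x + b3 * y) ^ 4"
    unfolding k pow4_scale by simp
  moreover have "l1 * k ^ 4 \<ge> 0" using l by (simp add: zero_le_even_power)
  ultimately have W: "l1 * k ^ 4 \<ge> 0 \<and> l2 \<ge> 0 \<and> l3 \<ge> 0 \<and> (\<forall>x y. l1 * (a1 * x + b1 * y) ^ 4 + l2 * (a2 * x + b2 * y) ^ 4 + l3 * (a3 * x + b3 * y) ^ 4
       = (l1 * k ^ 4) * (s1 * x + s2 * y) ^ 4 + l2 * (a2 * x + b2 * y) ^ 4 + l3 * (a3 * x + b3 * y) ^ 4)"
    using l by (blast intro: less_imp_le)
  show ?thesis using W by blast
next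
  case n1: False
  show ?thesis
  proof (cases "s2 * a2 - s1 * b2 = 0")
    case True
    then obtain k where k: "a2 = k * s1" "b2 = k * s2" using prop_scale[OF nz(4)] by blast
    have "\<forall>x y. l1 * (a1 * x + b1 * y) ^ 4 + l2 * (a2 * x + b2 * y) ^ 4 + l3 * (a3 * x + b3 * y) ^ 4
         = (l2 * k ^ 4) * (s1 * x + s2 * y) ^ 4 + l1 * (a1 * x + b1 * y) ^ 4 + l3 * (a3 * x + b3 * y) ^ 4"
      unfolding k pow4_scale by simp
    moreover have "l2 * k ^ 4 \<ge> 0" using l by (simp add: zero_le_even_power)
    ultimately have W: "l2 * k ^ 4 \<ge> 0 \<and> l1 \<ge> 0 \<and> l3 \<ge> 0 \<and> (\<forall>x y. l1 * (a1 * x + b1 * y) ^ 4 + l2 * (a2 * x + b2 * y) ^ 4 + l3 * (a3 * x + b3 * y) ^ 4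
         = (l2 * k ^ 4) * (s1 * x + s2 * y) ^ 4 + l1 * (a1 * x + b1 * y) ^ 4 + l3 * (a3 * x + b3 * y) ^ 4)"
      using l by (blast intro: less_imp_le)
    show ?thesis using W by blast
  next
    case n2: False
    show ?thesis
    proof (cases "s2 * a3 - s1 * b3 = 0")
      case True
      then obtain k where k: "a3 = k * s1" "b3 = k * s2" using prop_scale[OF nz(4)] by blast
      have "\<forall>x y. l1 * (a1 * x + b1 * y) ^ 4 + l2 * (a2 * x + b2 * y) ^ 4 + l3 * (a3 * x + b3 * y) ^ 4
           = (l3 * k ^ 4) * (s1 * x + s2 * y) ^ 4 + l1 * (a1 * x + b1 * y) ^ 4 + l2 * (a2 * x + b2 * y) ^ 4"
        unfolding k pow4_scale by simp
      moreover have "l3 * k ^ 4 \<ge> 0" using l by (simp add: zero_le_even_power)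
      ultimately have W: "l3 * k ^ 4 \<ge> 0 \<and> l1 \<ge> 0 \<and> l2 \<ge> 0 \<and> (\<forall>x y. l1 * (a1 * x + b1 * y) ^ 4 + l2 * (a2 * x + b2 * y) ^ 4 + l3 * (a3 * x + b3 * y) ^ 4
           = (l3 * k ^ 4) * (s1 * x + s2 * y) ^ 4 + l1 * (a1 * x + b1 * y) ^ 4 + l2 * (a2 * x + b2 * y) ^ 4)"
        using l by (blast intro: less_imp_le)
      show ?thesis using W by blast
    next
      case n3: False
      show ?thesis by (rule lemmaT_np[OF l nz np n1 n2 n3])
    qed
  qed
qed

lemma sum_list_perm:
  fixes f :: "'a \<Rightarrow> real"
  assumes h: "mset xs = mset ys" shows "sum_list (map f xs) = sum_list (map f ys)"
proof -
  have "sum_list (map f xs) = sum_mset (mset (map f xs))" by (rule sum_mset_sum_list[symmetric])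
  also have "mset (map f xs) = mset (map f ys)" using h by simp
  also have "sum_mset (mset (map f ys)) = sum_list (map f ys)" by (rule sum_mset_sum_list)
  finally show ?thesis .
qed

lemma prerep_perm:
  assumes h: "mset R = mset R2" shows "prerep p R \<longleftrightarrow> prerep p R2"
proof -
  have "\<And>x y. (\<Sum>(l, a, b)\<leftarrow>R. l * (a * x + b * y) ^ 4) = (\<Sum>(l, a, b)\<leftarrow>R2. l * (a * x + b * y) ^ 4)"
    using sum_list_perm[OF h] by blast
  thus ?thesis unfolding prerep_def by simp
qed

lemma length_filter_perm:
  assumes h: "mset R = mset R2" shows "length (filter P R) = length (filter P R2)"
proof -
  have "length (filter P R) = size (mset (filter P R))" by (rule size_mset[symmetric])
  also have "mset (filter P R) = mset (filter P R2)" using h by simp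
  also have "size (mset (filter P R2)) = length (filter P R2)" by (rule size_mset)
  finally show ?thesis .
qed

lemma badge_perm:
  assumes h: "mset R = mset R2" shows "badge R = badge R2"
  unfolding badge_def using length_filter_perm[OF h] by simp

lemma shrink_pos:
  assumes g: "good R" and rep: "prerep p R" and a3: "fst (badge R) \<ge> 3" and len: "length R \<ge> 4"
  shows "\<exists>R'. prerep p R' \<and> badge_le (badge R') (badge R) \<and> length R' < length R"
proof -
  define Ps where "Ps = filter (\<lambda>t. fst t > 0) R"
  define Ns where "Ns = filter (\<lambda>t. \<not> fst t > 0) R"
  have mR: "mset R = mset Ps + mset Ns" unfolding Ps_def Ns_def by (simp add: multiset_partition[symmetric])
  have lP: "length Ps \<ge> 3" using a3 unfolding Ps_def badge_def by simp
  have lPN: "length R = length Ps + length Ns" using mR by (metis size_mset size_union)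
  have "\<exists>x1 x2 x3 ps. Ps = x1 # x2 # x3 # ps" using lP by (auto simp: Suc_le_length_iff eval_nat_numeral)
  then obtain x1 x2 x3 ps where Ps: "Ps = x1 # x2 # x3 # ps" by blast
  obtain y rest where dec: "mset R = mset (x1 # x2 # x3 # y # rest)"
  proof (cases ps)
    case (Cons y ps')
    show ?thesis by (rule that[of y "ps' @ Ns"]) (simp add: mR Ps Cons)
  next
    case Nil
    hence "Ns \<noteq> []" using len lPN Ps by auto
    then obtain y ns where "Ns = y # ns" by (cases Ns) auto
    thus ?thesis by (intro that[of y ns]) (simp add: mR Ps Nil)
  qed
  have sR: "sorted_wrt NP R" using g unfolding good_def honest_sorted by simp
  hence "sorted_wrt NP Ps" unfolding Ps_def by (rule sorted_wrt_filter)
  hence np: "NP x1 x2" "NP x1 x3" "NP x2 x3" unfolding Ps by auto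
  have "set R = set (x1 # x2 # x3 # y # rest)" using dec by (metis set_mset_mset)
  hence inR: "x1 \<in> set R" "x2 \<in> set R" "x3 \<in> set R" "y \<in> set R" by simp_all
  have "set Ps \<subseteq> {t. fst t > 0}" unfolding Ps_def by auto
  hence pos: "fst x1 > 0" "fst x2 > 0" "fst x3 > 0" unfolding Ps by auto
  obtain l1 a1 b1 where x1: "x1 = (l1, a1, b1)" by (cases x1) auto
  obtain l2 a2 b2 where x2: "x2 = (l2, a2, b2)" by (cases x2) auto
  obtain l3 a3 b3 where x3: "x3 = (l3, a3, b3)" by (cases x3) auto
  obtain ly s1 s2 where y: "y = (ly, s1, s2)" by (cases y) auto
  have nzR: "\<forall>t\<in>set R. snd t \<noteq> (0, 0)" using g unfolding good_def by simp
  have nz: "(a1, b1) \<noteq> (0, 0)" "(a2, b2) \<noteq> (0, 0)" "(a3, b3) \<noteq> (0, 0)" "(s1, s2) \<noteq> (0, 0)"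
  proof -
    have "snd x1 \<noteq> (0, 0)" "snd x2 \<noteq> (0, 0)" "snd x3 \<noteq> (0, 0)" "snd y \<noteq> (0, 0)"
      using nzR inR by simp_all
    thus "(a1, b1) \<noteq> (0, 0)" "(a2, b2) \<noteq> (0, 0)" "(a3, b3) \<noteq> (0, 0)" "(s1, s2) \<noteq> (0, 0)"
      unfolding x1 x2 x3 y by simp_all
  qed
  have npr: "a1 * b2 - a2 * b1 \<noteq> 0" "a1 * b3 - a3 * b1 \<noteq> 0" "a2 * b3 - a3 * b2 \<noteq> 0"
    using np unfolding NP_def proportional_def x1 x2 x3 by auto
  have lpos: "l1 > 0" "l2 > 0" "l3 > 0" using pos unfolding x1 x2 x3 by simp_all
  obtain u1 u2 v1 v2 nt nu nv where T: "nt \<ge> 0" "nu \<ge> 0" "nv \<ge> 0"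
    "\<forall>x y. l1 * (a1 * x + b1 * y) ^ 4 + l2 * (a2 * x + b2 * y) ^ 4 + l3 * (a3 * x + b3 * y) ^ 4
       = nt * (s1 * x + s2 * y) ^ 4 + nu * (u1 * x + u2 * y) ^ 4 + nv * (v1 * x + v2 * y) ^ 4"
    using lemmaT[OF lpos nz npr] by (elim exE conjE) blast
  define R' where "R' = (nt + ly, s1, s2) # (nu, u1, u2) # (nv, v1, v2) # rest"
  have "prerep p (x1 # x2 # x3 # y # rest)" using rep dec prerep_perm by blast
  hence h: "\<And>x y. p x y = l1 * (a1 * x + b1 * y) ^ 4 + l2 * (a2 * x + b2 * y) ^ 4 + l3 * (a3 * x + b3 * y) ^ 4
     + ly * (s1 * x + s2 * y) ^ 4 + (\<Sum>(l, a, b)\<leftarrow>rest. l * (a * x + b * y) ^ 4)"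
    unfolding prerep_def x1 x2 x3 y by (simp add: add.assoc)
  have "prerep p R'"
    unfolding prerep_def R'_def
  proof (intro allI)
    fix x y
    have e1: "(nt + ly) * (s1 * x + s2 * y) ^ 4 = nt * (s1 * x + s2 * y) ^ 4 + ly * (s1 * x + s2 * y) ^ 4"
      by (rule distrib_right)
    have "p x y = (nt + ly) * (s1 * x + s2 * y) ^ 4 + (nu * (u1 * x + u2 * y) ^ 4 + (nv * (v1 * x + v2 * y) ^ 4
      + (\<Sum>(l, a, b)\<leftarrow>rest. l * (a * x + b * y) ^ 4)))"
      using h[of x y] T(4)[rule_format, of x y] e1 by linarith
    thus "p x y = (\<Sum>(l, a, b)\<leftarrow>(nt + ly, s1, s2) # (nu, u1, u2) # (nv, v1, v2) # rest. l * (a * x + b * y) ^ 4)"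
      by simp
  qed
  moreover have "badge_le (badge R') (badge R)"
  proof -
    have bR: "badge R = badge (x1 # x2 # x3 # y # rest)" using dec badge_perm by blast
    define X1 where "X1 = (if nt + ly > 0 then 1 else 0) + (if nu > 0 then 1 else 0) + (if nv > 0 then (1::nat) else 0)"
    define X2 where "X2 = (if nt + ly < 0 then 1 else 0) + (if nu < 0 then 1 else 0) + (if nv < 0 then (1::nat) else 0)"
    define Y1 where "Y1 = (3::nat) + (if ly > 0 then 1 else 0)"
    define Y2 where "Y2 = (if ly < 0 then (1::nat) else 0)"
    have A: "X1 \<le> Y1" unfolding X1_def Y1_def by auto
    have B: "X2 \<le> Y2" unfolding X2_def Y2_def using T(1-3) by auto
    have f1: "fst (badge R') = X1 + fst (badge rest)" "snd (badge R') = X2 + snd (badge rest)"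
      unfolding R'_def badge_Cons X1_def X2_def by simp_all
    have f2: "fst (badge R) = Y1 + fst (badge rest)" "snd (badge R) = Y2 + snd (badge rest)"
      unfolding bR badge_Cons x1 x2 x3 y Y1_def Y2_def using lpos by simp_all
    show ?thesis unfolding badge_le_def f1 f2 using A B by simp
  qed
  moreover have "length R' < length R" using mset_eq_length[OF dec] unfolding R'_def by simp
  ultimately show ?thesis by blast
qed



lemma badge_sum:
  assumes "is_representation p R"
  shows "fst (badge R) + snd (badge R) = length R"
proof -
  have nz: "\<forall>t\<in>set R. fst t \<noteq> 0" using assms unfolding is_representation_def by simp
  have "filter (\<lambda>t. fst t < 0) R = filter (\<lambda>t. \<not> fst t > 0) R"
    using nz by (intro filter_cong) auto
  thus ?thesis unfolding badge_def using sum_length_filter_compl[of "\<lambda>t. fst t > 0" R] by simp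
qed

lemma reduce:
  assumes "good R" "is_representation p R"
  shows "\<exists>R'. is_representation p R' \<and> good R' \<and> badge_le (badge R') (badge R) \<and> (length R' \<le> 3 \<or> badge R' = (2, 2))"
  using assms
proof (induction "length R" arbitrary: p R rule: less_induct)
  case less
  show ?case
  proof (cases "length R \<le> 3 \<or> badge R = (2, 2)")
    case True thus ?thesis using less.prems by (intro exI[of _ R]) (auto simp: badge_le_def)
  next
    case False
    have sum: "fst (badge R) + snd (badge R) = length R" using badge_sum[OF less.prems(2)] .
    have ne: "\<not> (fst (badge R) = 2 \<and> snd (badge R) = 2)" using False by (cases "badge R") auto
    have "fst (badge R) \<ge> 3 \<or> snd (badge R) \<ge> 3" using False sum ne by linarith
    thus ?thesis
    proof
      assume a3: "fst (badge R) \<ge> 3"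
      obtain R1 where R1: "prerep p R1" "badge_le (badge R1) (badge R)" "length R1 < length R"
        using shrink_pos[OF less.prems(1) is_rep_prerep[OF less.prems(2)] a3] False by auto
      obtain R2 where R2: "is_representation p R2" "good R2" "badge_le (badge R2) (badge R1)" "length R2 \<le> length R1"
        using merge[OF R1(1)] by blast
      have "length R2 < length R" using R1(3) R2(4) by simp
      then obtain R' where R': "is_representation p R'" "good R'" "badge_le (badge R') (badge R2)"
        "length R' \<le> 3 \<or> badge R' = (2, 2)"
        using less.hyps[of R2 p] R2(1,2) by blast
      have "badge_le (badge R') (badge R)" using R'(3) R2(3) R1(2) by (blast intro: badge_le_trans)
      thus ?thesis using R' by blast
    next
      assume b3: "snd (badge R) \<ge> 3"
      let ?q = "\<lambda>x y. - p x y"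
      have g': "good (negR R)" using less.prems(1) good_negR by blast
      have r': "prerep ?q (negR R)" using prerep_negR[OF is_rep_prerep[OF less.prems(2)]] .
      have a3: "fst (badge (negR R)) \<ge> 3" using b3 badge_negR by simp
      have l4: "length (negR R) \<ge> 4" using False by simp
      obtain R1 where R1: "prerep ?q R1" "badge_le (badge R1) (badge (negR R))" "length R1 < length R"
        using shrink_pos[OF g' r' a3 l4] by auto
      obtain R2 where R2: "is_representation ?q R2" "good R2" "badge_le (badge R2) (badge R1)" "length R2 \<le> length R1"
        using merge[OF R1(1)] by blast
      have rep3: "is_representation p (negR R2)" using is_rep_negR[OF R2(1)] by simp
      have good3: "good (negR R2)" using R2(2) good_negR by blast
      have "badge_le (badge R2) (badge (negR R))" using R2(3) R1(2) by (blast intro: badge_le_trans)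
      hence b3le: "badge_le (badge (negR R2)) (badge R)" unfolding badge_le_def badge_negR by simp
      have "length (negR R2) < length R" using R1(3) R2(4) by simp
      then obtain R' where R': "is_representation p R'" "good R'" "badge_le (badge R') (badge (negR R2))"
        "length R' \<le> 3 \<or> badge R' = (2, 2)"
        using less.hyps[of "negR R2" p] rep3 good3 by blast
      have "badge_le (badge R') (badge R)" using R'(3) b3le by (blast intro: badge_le_trans)
      thus ?thesis using R' by blast
    qed
  qed
qed

lemma sorted_wrt_pair:
  assumes "sorted_wrt P xs" "x \<in> set xs" "y \<in> set xs" "x \<noteq> y"
  shows "P x y \<or> P y x"
proof -
  obtain i where i: "i < length xs" "xs ! i = x" using assms(2) by (auto simp: in_set_conv_nth)
  obtain j where j: "j < length xs" "xs ! j = y" using assms(3) by (auto simp: in_set_conv_nth)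
  have "i \<noteq> j" using i j assms(4) by auto
  show ?thesis
  proof (cases "i < j")
    case True thus ?thesis using assms(1) i j unfolding sorted_wrt_iff_nth_less by blast
  next
    case False hence "j < i" using \<open>i \<noteq> j\<close> by simp
    thus ?thesis using assms(1) i j unfolding sorted_wrt_iff_nth_less by blast
  qed
qed

lemma good_NP:
  assumes "good S" "x \<in> set S" "y \<in> set S" "x \<noteq> y"
  shows "\<not> proportional (snd x) (snd y)"
proof -
  have "sorted_wrt NP S" using assms(1) unfolding good_def honest_sorted by simp
  hence "NP x y \<or> NP y x" by (rule sorted_wrt_pair[OF _ assms(2-4)])
  thus ?thesis unfolding NP_def using proportional_sym[of "snd x" "snd y"] by blast
qed

lemma sorted_np_distinct:
  "sorted_wrt (\<lambda>u v. \<not> proportional u v) xs \<Longrightarrow> distinct xs"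
proof (induction xs)
  case (Cons x xs)
  have "\<not> proportional x x" if "x \<in> set xs" using Cons.prems that by simp
  moreover have "proportional x x" unfolding proportional_def by simp
  ultimately show ?case using Cons by auto
qed simp

lemma sum_list_pos:
  fixes f :: "'a \<Rightarrow> real"
  assumes "\<forall>x\<in>set xs. f x \<ge> 0" "z \<in> set xs" "f z > 0"
  shows "sum_list (map f xs) > 0"
  using assms
proof (induction xs)
  case (Cons x xs)
  show ?case
  proof (cases "z = x")
    case True
    have "sum_list (map f xs) \<ge> 0" using Cons.prems(1) by (intro sum_list_nonneg) auto
    thus ?thesis using True Cons.prems(3) by simp
  next
    case False
    hence "sum_list (map f xs) > 0" using Cons by simp
    thus ?thesis using Cons.prems(1) by simp
  qed
qed simp

lemma make_g:
  fixes t0 :: "real \<times> real"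
  assumes "length C \<le> 2" "t0 \<noteq> (0, 0)" "\<forall>c\<in>set C. \<not> proportional t0 c"
  shows "\<exists>g. hform 2 g \<and> (\<forall>c\<in>set C. g (fst c) (snd c) = 0) \<and> g (fst t0) (snd t0) \<noteq> 0"
proof -
  define n0 where "n0 = (\<lambda>a b::real. fst t0 * a + snd t0 * b)"
  have hn0: "hform 1 n0" unfolding n0_def by (rule hform_lin)
  have n0t: "n0 (fst t0) (snd t0) \<noteq> 0"
  proof -
    have "n0 (fst t0) (snd t0) = fst t0 ^ 2 + snd t0 ^ 2" by (simp add: n0_def power2_eq_square)
    moreover have "fst t0 ^ 2 + snd t0 ^ 2 > 0" using assms(2)
      by (cases t0) (auto simp: sum_power2_gt_zero_iff)
    ultimately show ?thesis by linarith
  qed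
  define lin where "lin = (\<lambda>c::real \<times> real. \<lambda>a b::real. snd c * a - fst c * b)"
  have hlin: "hform 1 (lin c)" for c unfolding lin_def by (rule hform_linf)
  have linc: "lin c (fst c) (snd c) = 0" for c by (simp add: lin_def)
  have lint: "lin c (fst t0) (snd t0) \<noteq> 0" if "c \<in> set C" for c
    using assms(3) that unfolding lin_def proportional_def by (auto simp: algebra_simps)
  have h2: "hform 2 (\<lambda>a b. f1 a b * f2 a b)" if "hform 1 f1" "hform 1 f2" for f1 f2
    using hform_mult[OF that] by (simp add: numeral_2_eq_2)
  show ?thesis
  proof (cases C)
    case Nil
    thus ?thesis using h2[OF hn0 hn0] n0t by (intro exI[of _ "\<lambda>a b. n0 a b * n0 a b"]) auto
  next
    case (Cons c1 C1)
    show ?thesis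
    proof (cases C1)
      case Nil
      thus ?thesis using h2[OF hlin hn0] n0t lint linc Cons
        by (intro exI[of _ "\<lambda>a b. lin c1 a b * n0 a b"]) auto
    next
      case (Cons c2 C2)
      hence "C2 = []" using assms(1) \<open>C = c1 # C1\<close> by simp
      thus ?thesis using h2[OF hlin hlin] lint linc Cons \<open>C = c1 # C1\<close>
        by (intro exI[of _ "\<lambda>a b. lin c1 a b * lin c2 a b"]) auto
    qed
  qed
qed



lemma prop_trans2:
  assumes "s \<noteq> (0, 0)" "proportional t s" "proportional t' s"
  shows "proportional t t'"
proof -
  obtain s1 s2 where s: "s = (s1, s2)" by (cases s)
  obtain a1 b1 where t: "t = (a1, b1)" by (cases t)
  obtain a2 b2 where t': "t' = (a2, b2)" by (cases t')
  have "a1 * b2 - a2 * b1 = 0"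
    using prop_trans_raw[of s1 s2 a1 b1 a2 b2] assms unfolding s t t' proportional_def by simp
  thus ?thesis unfolding t t' proportional_def by simp
qed

lemma lower_bound_fst:
  assumes S: "good S" "is_representation p S" "length S \<le> 3"
  and R: "good R" "is_representation p R"
  shows "fst (badge S) \<le> fst (badge R)"
proof (rule ccontr)
  assume "\<not> ?thesis"
  hence lt: "fst (badge R) < fst (badge S)" by simp
  define PS where "PS = map snd (filter (\<lambda>t. fst t > 0) S)"
  define NS where "NS = map snd (filter (\<lambda>t. fst t < 0) S)"
  define PR where "PR = map snd (filter (\<lambda>t. fst t > 0) R)"
  have lens: "length PS = fst (badge S)" "length NS = snd (badge S)" "length PR = fst (badge R)"
    unfolding PS_def NS_def PR_def badge_def by simp_all
  have sumS: "fst (badge S) + snd (badge S) \<le> 3" using badge_sum[OF S(2)] S(3) by simp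
  have nzR: "\<forall>t\<in>set R. snd t \<noteq> (0, 0)" using R(1) unfolding good_def by simp
  have nzS: "\<forall>t\<in>set S. snd t \<noteq> (0, 0)" using S(1) unfolding good_def by simp
  have PSnp: "\<not> proportional t t'" if "t \<in> set PS" "t' \<in> set PS" "t \<noteq> t'" for t t'
  proof -
    have "t \<in> snd ` set S" "t' \<in> snd ` set S" using that(1,2) unfolding PS_def by auto
    then obtain x x' where x: "x \<in> set S" "t = snd x" and x': "x' \<in> set S" "t' = snd x'" by blast
    have "x \<noteq> x'" using x x' that(3) by auto
    thus ?thesis using good_NP[OF S(1) x(1) x'(1)] x x' by simp
  qed
  have "\<exists>t0\<in>set PS. \<forall>s\<in>set PR. \<not> proportional t0 s"
  proof (rule ccontr)
    assume "\<not> ?thesis"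
    hence "\<forall>t\<in>set PS. \<exists>s. s \<in> set PR \<and> proportional t s" by blast
    then obtain f where f: "\<forall>t\<in>set PS. f t \<in> set PR \<and> proportional t (f t)" by metis
    have inj: "inj_on f (set PS)"
    proof (rule inj_onI)
      fix t t' assume tt: "t \<in> set PS" "t' \<in> set PS" "f t = f t'"
      have "f t \<in> set PR" using f tt(1) by blast
      hence "f t \<noteq> (0, 0)" using nzR unfolding PR_def by auto
      moreover have "proportional t (f t)" "proportional t' (f t)" using f tt by auto
      ultimately have "proportional t t'" by (rule prop_trans2)
      thus "t = t'" using PSnp tt(1,2) by blast
    qed
    have "card (set PS) \<le> card (set PR)"
      by (rule card_inj_on_le[OF inj]) (use f in auto)
    also have "\<dots> \<le> length PR" by (rule card_length)
    finally have "card (set PS) \<le> length PR" .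
    moreover have "distinct PS"
    proof -
      have "sorted_wrt NP (filter (\<lambda>t. fst t > 0) S)"
        using S(1) unfolding good_def honest_sorted by (simp add: sorted_wrt_filter)
      hence "sorted_wrt (\<lambda>u v. \<not> proportional u v) PS"
        unfolding PS_def sorted_wrt_map NP_def by simp
      thus ?thesis by (rule sorted_np_distinct)
    qed
    ultimately have "length PS \<le> length PR" using distinct_card by metis
    thus False using lens lt by simp
  qed
  then obtain t0 where t0: "t0 \<in> set PS" "\<forall>s\<in>set PR. \<not> proportional t0 s" by blast
  obtain x0 where x0: "x0 \<in> set S" "fst x0 > 0" "snd x0 = t0" using t0(1) unfolding PS_def by auto
  define C where "C = PR @ NS"
  have lC: "length C \<le> 2" unfolding C_def using lens lt sumS by simp
  have t0nz: "t0 \<noteq> (0, 0)" using nzS x0 by auto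
  have t0C: "\<forall>c\<in>set C. \<not> proportional t0 c"
  proof
    fix c assume "c \<in> set C"
    hence "c \<in> set PR \<or> c \<in> set NS" unfolding C_def by auto
    thus "\<not> proportional t0 c"
    proof
      assume "c \<in> set NS"
      then obtain y where y: "y \<in> set S" "fst y < 0" "c = snd y" unfolding NS_def by auto
      have "x0 \<noteq> y" using x0(2) y(2) by auto
      thus ?thesis using good_NP[OF S(1) x0(1) y(1)] x0(3) y(3) by simp
    qed (use t0 in blast)
  qed
  obtain g where g: "hform 2 g" "\<forall>c\<in>set C. g (fst c) (snd c) = 0" "g (fst t0) (snd t0) \<noteq> 0"
    using make_g[OF lC t0nz t0C] by blast
  have hgg: "hform 4 (\<lambda>a b. g a b * g a b)" using hform_mult[OF g(1) g(1)] by simp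
  have eq: "LR S (\<lambda>a b. g a b * g a b) = LR R (\<lambda>a b. g a b * g a b)"
    using LR_hform4[OF is_rep_prerep[OF S(2)] is_rep_prerep[OF R(2)] hgg] .
  define h where "h = (\<lambda>t::real \<times> real \<times> real. fst t * (g (fst (snd t)) (snd (snd t)) * g (fst (snd t)) (snd (snd t))))"
  have LRh: "LR T (\<lambda>a b. g a b * g a b) = sum_list (map h T)" for T
    unfolding LR_def h_def by (induction T) auto
  have "sum_list (map h S) > 0"
  proof (rule sum_list_pos)
    show "\<forall>x\<in>set S. h x \<ge> 0"
    proof
      fix x assume x: "x \<in> set S"
      show "h x \<ge> 0"
      proof (cases "fst x < 0")
        case True
        hence "snd x \<in> set C" unfolding C_def NS_def using x by auto
        hence "g (fst (snd x)) (snd (snd x)) = 0" using g(2) by blast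
        thus ?thesis unfolding h_def by simp
      next
        case False thus ?thesis unfolding h_def by simp
      qed
    qed
    show "x0 \<in> set S" by (rule x0(1))
    have "g (fst t0) (snd t0) * g (fst t0) (snd t0) > 0" using g(3) by (simp add: not_square_less_zero less_le)
    thus "h x0 > 0" unfolding h_def using x0(2,3) by simp
  qed
  moreover have "sum_list (map h R) \<le> 0"
  proof (rule sum_list_nonpos)
    fix z assume "z \<in> set (map h R)"
    then obtain x where x: "x \<in> set R" "z = h x" by auto
    show "z \<le> 0"
    proof (cases "fst x > 0")
      case True
      hence "snd x \<in> set C" unfolding C_def PR_def using x by auto
      hence "g (fst (snd x)) (snd (snd x)) = 0" using g(2) by blast
      thus ?thesis unfolding x h_def by simp
    next
      case False thus ?thesis unfolding x h_def by (simp add: mult_nonpos_nonneg)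
    qed
  qed
  ultimately show False using eq LRh by simp
qed

lemma lower_bound:
  assumes "good S" "is_representation p S" "length S \<le> 3" "good R" "is_representation p R"
  shows "badge_le (badge S) (badge R)"
proof -
  have "fst (badge S) \<le> fst (badge R)" by (rule lower_bound_fst[OF assms])
  moreover have "fst (badge (negR S)) \<le> fst (badge (negR R))"
    by (rule lower_bound_fst[of "negR S" "\<lambda>x y. - p x y" "negR R"])
       (use assms good_negR is_rep_negR in auto)
  ultimately show ?thesis unfolding badge_le_def badge_negR by simp
qed



theorem theorem4p1:
  fixes p :: "real \<Rightarrow> real \<Rightarrow> real"
  assumes "binary_quartic p"
  shows "\<exists>!s. is_signature p s"
proof -
  obtain R0 where "prerep p R0" using exists_prerep[OF assms] by blast
  then obtain R1 where R1: "is_representation p R1" "good R1" using merge by blast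
  have goodB: "\<exists>R'. is_representation p R' \<and> good R' \<and> badge_le (badge R') t" if tB: "t \<in> badges p" for t
  proof -
    obtain R where R: "t = badge R" "is_representation p R" "honest R" using tB unfolding badges_def by blast
    obtain R' where "is_representation p R'" "good R'" "badge_le (badge R') (badge R)"
      using merge[OF is_rep_prerep[OF R(2)]] by blast
    thus ?thesis using R(1) by blast
  qed
  have inB: "badge R \<in> badges p" if RR: "is_representation p R" "good R" for R
    using RR unfolding badges_def good_def by blast
  have least: "\<exists>s\<in>badges p. \<forall>t\<in>badges p. badge_le s t"
  proof (cases "\<exists>S. good S \<and> is_representation p S \<and> length S \<le> 3")
    case True
    then obtain S where S: "good S" "is_representation p S" "length S \<le> 3" by blast
    have "\<forall>t\<in>badges p. badge_le (badge S) t"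
    proof
      fix t assume "t \<in> badges p"
      then obtain R' where R': "is_representation p R'" "good R'" "badge_le (badge R') t" using goodB by blast
      have "badge_le (badge S) (badge R')" by (rule lower_bound[OF S R'(2,1)])
      thus "badge_le (badge S) t" using R'(3) by (rule badge_le_trans)
    qed
    thus ?thesis using inB[OF S(2,1)] by blast
  next
    case False
    have red: "\<exists>R'. is_representation p R' \<and> good R' \<and> badge_le (badge R') (badge R) \<and> badge R' = (2, 2)"
      if RR: "is_representation p R" "good R" for R
      using reduce[OF RR(2,1)] False by blast
    obtain R2 where R2: "is_representation p R2" "good R2" "badge R2 = (2, 2)" using red[OF R1] by blast
    have "\<forall>t\<in>badges p. badge_le (2, 2) t"
    proof
      fix t assume "t \<in> badges p"
      then obtain R' where R': "is_representation p R'" "good R'" "badge_le (badge R') t" using goodB by blast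
      then obtain R'' where "badge_le (badge R'') (badge R')" "badge R'' = (2, 2)" using red by blast
      thus "badge_le (2, 2) t" using R'(3) badge_le_trans by metis
    qed
    moreover have "(2, 2) \<in> badges p" using inB[OF R2(1,2)] R2(3) by simp
    ultimately show ?thesis by blast
  qed
  then obtain s where s: "s \<in> badges p" "\<forall>t\<in>badges p. badge_le s t" by blast
  have antisym: "badge_le u v \<Longrightarrow> badge_le v u \<Longrightarrow> u = v" for u v
    unfolding badge_le_def by (simp add: prod_eq_iff)
  have sig: "is_signature p s" unfolding is_signature_def using s antisym by blast
  moreover have "s' = s" if ss: "is_signature p s'" for s'
  proof -
    have "s' \<in> badges p" "\<forall>t\<in>badges p. badge_le t s' \<longrightarrow> t = s'" using ss unfolding is_signature_def by auto
    thus ?thesis using s by blast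
  qed
  ultimately show ?thesis by blast
qed

end
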